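(* Let $\epsilon\in(0,1)$, let $m\le k\le n$ be positive integers with $k\ge\frac{m-1}{2\epsilon}$, and let $\mathbf a_1,\dots,\mathbf a_n\in\mathbb R^m$. Let $w^*=\max\{[\det(\sum_{i\in S}\mathbf a_i\mathbf a_i^\top)]^{1/m}: S\subseteq[n],|S|=k\}$, let $(\hat{\mathbf x},\hat w)$ be an optimal solution of the convex relaxation $$\max_{\mathbf x,w}\Big\{w:\ w\le \Big[\det\Big(\sum_{i\in[n]}x_i\mathbf a_i\mathbf a_i^\top\Big)\Big]^{1/m},\ \sum_{i\in[n]}x_i=k,\ \mathbf x\in[0,1]^n\Big\},$$ and let $\mathcal S$ be the random size-$k$ subset of $[n]$ with $\Pr[\mathcal S=S]=\prod_{j\in S}\hat x_j\big/\sum_{\bar S\subseteq[n],|\bar S|=k}\prod_{i\in\bar S}\hat x_i$ for every $S\subseteq[n]$ with $|S|=k$. Then $$\Big\{\mathbb E\Big[\det\Big(\sum_{i\in\mathcal S}\mathbf a_i\mathbf a_i^\top\Big)\Big]\Big\}^{1/m}\ge (0.5-\epsilon)\,w^*.$$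
   Context: $[n]=\{1,\dots,n\}$. *)

theory Defs
  imports "HOL-Analysis.Analysis"
begin

definition outer :: "real ^ 'm \<Rightarrow> real ^ 'm ^ 'm" where
  "outer v = (\<chi> r c. v $ r * v $ c)"

definition wdet :: "(nat \<Rightarrow> real) \<Rightarrow> (nat \<Rightarrow> real ^ 'm) \<Rightarrow> nat set \<Rightarrow> real" where
  "wdet x a S = det (\<Sum>i\<in>S. x i *\<^sub>R outer (a i))"

definition relax_feasible :: "nat \<Rightarrow> nat \<Rightarrow> (nat \<Rightarrow> real ^ 'm) \<Rightarrow> (nat \<Rightarrow> real) \<Rightarrow> real \<Rightarrow> bool" where
  "relax_feasible n k a x w \<longleftrightarrow>
     w \<le> wdet x a {1..n} powr (1 / real CARD('m)) \<and>
     (\<Sum>i\<in>{1..n}. x i) = real k \<and> (\<forall>i\<in>{1..n}. 0 \<le> x i \<and> x i \<le> 1)"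

definition relax_optimal :: "nat \<Rightarrow> nat \<Rightarrow> (nat \<Rightarrow> real ^ 'm) \<Rightarrow> (nat \<Rightarrow> real) \<Rightarrow> real \<Rightarrow> bool" where
  "relax_optimal n k a x w \<longleftrightarrow> relax_feasible n k a x w \<and>
     (\<forall>x' w'. relax_feasible n k a x' w' \<longrightarrow> w' \<le> w)"

definition ksubsets :: "nat \<Rightarrow> nat \<Rightarrow> nat set set" where
  "ksubsets n k = {S. S \<subseteq> {1..n} \<and> card S = k}"

definition sample_prob :: "nat \<Rightarrow> nat \<Rightarrow> (nat \<Rightarrow> real) \<Rightarrow> nat set \<Rightarrow> real" where
  "sample_prob n k x S = (\<Prod>j\<in>S. x j) / (\<Sum>T\<in>ksubsets n k. \<Prod>i\<in>T. x i)"

end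

theory Submission
  imports Defs
begin

definition Gf :: "(nat \<Rightarrow> real ^ 'm::finite) \<Rightarrow> ('m \<Rightarrow> nat) \<Rightarrow> real" where
  "Gf a f = (\<Prod>r\<in>UNIV. a (f r) $ r) * det (\<chi> r. a (f r))"

definition msub :: "nat set \<Rightarrow> 'm itself \<Rightarrow> nat set set" where
  "msub S t = {T. T \<subseteq> S \<and> card T = CARD('m)}"

lemma finite_funs: "finite S \<Longrightarrow> finite {f :: 'm::finite \<Rightarrow> nat. \<forall>r. f r \<in> S}"
proof -
  assume "finite S"
  have "{f :: 'm \<Rightarrow> nat. \<forall>r. f r \<in> S} = PiE UNIV (\<lambda>_. S)"
    by (auto simp: PiE_def Pi_def)
  then show ?thesis using \<open>finite S\<close> by (simp add: finite_PiE)
qed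

lemma det_rows_sum_gen:
  assumes fS: "finite S"
    and fT: "finite T"
  shows "det ((\<chi> i. if i \<in> T then sum (a i) S else c i):: 'a::comm_ring_1^'n^'n) =
    sum (\<lambda>f. det((\<chi> i. if i \<in> T then a i (f i) else c i)::'a^'n^'n))
      {f. (\<forall>i \<in> T. f i \<in> S) \<and> (\<forall>i. i \<notin> T \<longrightarrow> f i = d)}"
  using fT
proof (induct T arbitrary: a c set: finite)
  case empty
  have th0: "\<And>x y. (\<chi> i. if i \<in> {} then x i else y i) = (\<chi> i. y i)"
    by vector
  have E: "{f. (\<forall>i \<in> {}. f i \<in> S) \<and> (\<forall>i. i \<notin> {} \<longrightarrow> f i = d)} = {\<lambda>_. d}"
    by auto
  show ?case
    unfolding th0 E by simp
next
  case (insert z T a c)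
  let ?F = "\<lambda>T. {f. (\<forall>i \<in> T. f i \<in> S) \<and> (\<forall>i. i \<notin> T \<longrightarrow> f i = d)}"
  let ?h = "\<lambda>(y,g) i. if i = z then y else g i"
  let ?k = "\<lambda>h. (h(z),(\<lambda>i. if i = z then d else h i))"
  have thif: "\<And>a b c d. (if a \<or> b then c else d) = (if a then c else if b then c else d)"
    by simp
  have thif2: "\<And>a b c d e. (if a then b else if c then d else e) =
     (if c then (if a then b else d) else (if a then b else e))"
    by simp
  from \<open>z \<notin> T\<close> have nz: "\<And>i. i \<in> T \<Longrightarrow> i \<noteq> z"
    by auto
  have "det (\<chi> i. if i \<in> insert z T then sum (a i) S else c i) =
    det (\<chi> i. if i = z then sum (a i) S else if i \<in> T then sum (a i) S else c i)"
    unfolding insert_iff thif ..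
  also have "\<dots> = (\<Sum>j\<in>S. det (\<chi> i. if i \<in> T then sum (a i) S else if i = z then a i j else c i))"
    unfolding det_linear_row_sum[OF fS]
    by (subst thif2) (simp add: nz cong: if_cong)
  finally have tha:
    "det (\<chi> i. if i \<in> insert z T then sum (a i) S else c i) =
     (\<Sum>(j, f)\<in>S \<times> ?F T. det (\<chi> i. if i \<in> T then a i (f i)
                                else if i = z then a i j
                                else c i))"
    unfolding insert.hyps unfolding sum.cartesian_product by blast
  show ?case unfolding tha
    using \<open>z \<notin> T\<close>
    apply (intro sum.reindex_bij_witness[where i="?k" and j="?h"])
    subgoal by (auto simp: fun_eq_iff)
    subgoal by auto
    subgoal by (auto simp: fun_eq_iff)
    subgoal by auto
    subgoal by (auto intro!: cong[OF refl[of det]] simp: vec_eq_iff)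
    done
qed

lemma det_rows_sum_gen2:
  assumes fS: "finite S"
  shows "det ((\<chi> i. sum (a i) S):: 'a::comm_ring_1^'n^'n) =
    sum (\<lambda>f. det((\<chi> i. a i (f i))::'a^'n^'n)) {f. \<forall>i. f i \<in> S}"
  using det_rows_sum_gen[OF fS, where T=UNIV and a=a and c="\<lambda>_. 0" and d=undefined] by simp

lemma exp1:
  fixes a :: "nat \<Rightarrow> real ^ 'm::finite"
  assumes "finite S"
  shows "wdet y a S = (\<Sum>f\<in>{f :: 'm \<Rightarrow> nat. inj f \<and> range f \<subseteq> S}. (\<Prod>r\<in>UNIV. y (f r)) * Gf a f)"
proof -
  have M: "(\<Sum>i\<in>S. y i *\<^sub>R outer (a i)) = (\<chi> r. \<Sum>i\<in>S. (y i * a i $ r) *s a i)"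
    by (simp add: vec_eq_iff sum_component outer_def mult.assoc)
  have "wdet y a S = (\<Sum>f\<in>{f :: 'm \<Rightarrow> nat. \<forall>r. f r \<in> S}. det (\<chi> r. (y (f r) * a (f r) $ r) *s a (f r)))"
    unfolding wdet_def M by (rule det_rows_sum_gen2[OF assms])
  also have "\<dots> = (\<Sum>f\<in>{f :: 'm \<Rightarrow> nat. \<forall>r. f r \<in> S}. (\<Prod>r\<in>UNIV. y (f r)) * Gf a f)"
    by (rule sum.cong) (simp_all add: det_rows_mul Gf_def prod.distrib)
  also have "\<dots> = (\<Sum>f\<in>{f :: 'm \<Rightarrow> nat. inj f \<and> range f \<subseteq> S}. (\<Prod>r\<in>UNIV. y (f r)) * Gf a f)"
  proof (rule sum.mono_neutral_right)
    show "finite {f :: 'm \<Rightarrow> nat. \<forall>r. f r \<in> S}" by (rule finite_funs[OF assms])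
    show "{f :: 'm \<Rightarrow> nat. inj f \<and> range f \<subseteq> S} \<subseteq> {f :: 'm \<Rightarrow> nat. \<forall>r. f r \<in> S}" by auto
    show "\<forall>f\<in>{f :: 'm \<Rightarrow> nat. \<forall>r. f r \<in> S} - {f :: 'm \<Rightarrow> nat. inj f \<and> range f \<subseteq> S}. (\<Prod>r\<in>UNIV. y (f r)) * Gf a f = 0"
    proof
      fix f :: "'m \<Rightarrow> nat" assume "f \<in> {f :: 'm \<Rightarrow> nat. \<forall>r. f r \<in> S} - {f :: 'm \<Rightarrow> nat. inj f \<and> range f \<subseteq> S}"
      then have "\<not> inj f" by auto
      then obtain i j where ij: "i \<noteq> j" "f i = f j" unfolding inj_def by auto
      have "det (\<chi> r. a (f r)) = 0"
        by (rule det_identical_rows[OF ij(1)]) (simp add: row_def ij(2) vec_eq_iff)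
      then show "(\<Prod>r\<in>UNIV. y (f r)) * Gf a f = 0" by (simp add: Gf_def)
    qed
  qed
  finally show ?thesis .
qed

lemma exp2:
  fixes a :: "nat \<Rightarrow> real ^ 'm::finite"
  assumes "finite S"
  shows "wdet y a S = (\<Sum>T\<in>msub S TYPE('m). (\<Prod>t\<in>T. y t) * (\<Sum>f\<in>{f. inj f \<and> range f = T}. Gf a f))"
proof -
  have fin: "finite (msub S TYPE('m))" using assms unfolding msub_def by auto
  have U: "{f :: 'm \<Rightarrow> nat. inj f \<and> range f \<subseteq> S} = (\<Union>T\<in>msub S TYPE('m). {f. inj f \<and> range f = T})"
  proof (intro equalityI subsetI)
    fix f :: "'m \<Rightarrow> nat" assume "f \<in> {f. inj f \<and> range f \<subseteq> S}"
    then have f: "inj f" "range f \<subseteq> S" by auto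
    then have "range f \<in> msub S TYPE('m)" unfolding msub_def by (simp add: card_image)
    then show "f \<in> (\<Union>T\<in>msub S TYPE('m). {f. inj f \<and> range f = T})" using f by blast
  qed (auto simp: msub_def)
  have finT: "\<And>T. T \<in> msub S TYPE('m) \<Longrightarrow> finite {f :: 'm \<Rightarrow> nat. inj f \<and> range f = T}"
  proof -
    fix T assume "T \<in> msub S TYPE('m)"
    then have "finite T" using assms unfolding msub_def by (auto intro: finite_subset)
    then have "finite {f :: 'm \<Rightarrow> nat. \<forall>r. f r \<in> T}" by (rule finite_funs)
    then show "finite {f :: 'm \<Rightarrow> nat. inj f \<and> range f = T}" by (rule finite_subset[rotated]) auto
  qed
  have "wdet y a S = (\<Sum>f\<in>(\<Union>T\<in>msub S TYPE('m). {f. inj f \<and> range f = T}). (\<Prod>r\<in>UNIV. y (f r)) * Gf a f)"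
    unfolding U[symmetric] by (rule exp1[OF assms])
  also have "\<dots> = (\<Sum>T\<in>msub S TYPE('m). \<Sum>f\<in>{f. inj f \<and> range f = T}. (\<Prod>r\<in>UNIV. y (f r)) * Gf a f)"
  proof (rule sum.UNION_disjoint[OF fin])
    show "\<forall>T\<in>msub S TYPE('m). finite {f :: 'm \<Rightarrow> nat. inj f \<and> range f = T}" using finT by blast
    show "\<forall>A\<in>msub S TYPE('m). \<forall>B\<in>msub S TYPE('m). A \<noteq> B \<longrightarrow>
      {f :: 'm \<Rightarrow> nat. inj f \<and> range f = A} \<inter> {f. inj f \<and> range f = B} = {}" by blast
  qed
  also have "\<dots> = (\<Sum>T\<in>msub S TYPE('m). (\<Prod>t\<in>T. y t) * (\<Sum>f\<in>{f. inj f \<and> range f = T}. Gf a f))"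
  proof (rule sum.cong[OF refl])
    fix T
    have "(\<Prod>r\<in>UNIV. y (f r)) = (\<Prod>t\<in>T. y t)" if "inj f" "range f = T" for f :: "'m \<Rightarrow> nat"
      using prod.reindex[of f UNIV y] that by (simp add: o_def)
    then show "(\<Sum>f\<in>{f. inj f \<and> range f = T}. (\<Prod>r\<in>UNIV. y (f r)) * Gf a f) =
       (\<Prod>t\<in>T. y t) * (\<Sum>f\<in>{f. inj f \<and> range f = T}. Gf a f)"
      by (simp add: sum_distrib_left)
  qed
  finally show ?thesis .
qed

lemma Dsum:
  fixes a :: "nat \<Rightarrow> real ^ 'm::finite"
  assumes "finite T" "card T = CARD('m)"
  shows "(\<Sum>f\<in>{f. inj f \<and> range f = T}. Gf a f) = wdet (\<lambda>_. 1) a T"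
proof -
  have "{f :: 'm \<Rightarrow> nat. inj f \<and> range f \<subseteq> T} = {f. inj f \<and> range f = T}"
  proof (intro Collect_cong iffI conjI)
    fix f :: "'m \<Rightarrow> nat" assume f: "inj f \<and> range f \<subseteq> T"
    then show "inj f" by simp
    show "range f = T" using f assms card_subset_eq[of T "range f"] by (simp add: card_image)
  qed auto
  then show ?thesis using exp1[OF assms(1), of "\<lambda>_. 1" a] by simp
qed

lemma Dnonneg:
  fixes a :: "nat \<Rightarrow> real ^ 'm::finite"
  assumes "finite T" "card T = CARD('m)"
  shows "wdet (\<lambda>_. 1) a T \<ge> 0"
proof -
  obtain h where h: "bij_betw h (UNIV :: 'm set) T"
    using finite_same_card_bij[of "UNIV :: 'm set" T] assms by auto
  define B :: "real ^ 'm ^ 'm" where "B = (\<chi> r c. a (h c) $ r)"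
  have "(\<Sum>i\<in>T. 1 *\<^sub>R outer (a i)) = B ** transpose B"
  proof -
    have "\<And>r s. (\<Sum>i\<in>T. outer (a i) $ r $ s) = (\<Sum>c\<in>UNIV. a (h c) $ r * a (h c) $ s)"
      using sum.reindex_bij_betw[OF h, of "\<lambda>i. a i $ _ * a i $ _"] by (simp add: outer_def)
    then show ?thesis
      by (simp add: vec_eq_iff sum_component matrix_matrix_mult_def B_def transpose_def)
  qed
  then have "wdet (\<lambda>_. 1) a T = det B * det B"
    by (simp add: wdet_def det_mul det_transpose)
  then show ?thesis by simp
qed

definition esym :: "(nat \<Rightarrow> real) \<Rightarrow> nat set \<Rightarrow> nat \<Rightarrow> real" where
  "esym x R r = (\<Sum>U\<in>{U. U \<subseteq> R \<and> card U = r}. \<Prod>i\<in>U. x i)"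

lemma esym_0: "finite R \<Longrightarrow> esym x R 0 = 1"
proof -
  assume "finite R"
  then have "{U. U \<subseteq> R \<and> card U = 0} = {{}}" by (auto simp: card_eq_0_iff dest: finite_subset)
  then show ?thesis by (simp add: esym_def)
qed

lemma esym_empty_Suc: "esym x {} (Suc r) = 0"
proof -
  have "{U. U \<subseteq> {} \<and> card U = Suc r} = {}" by auto
  then show ?thesis by (simp add: esym_def)
qed

lemma esym_nonneg: "finite R \<Longrightarrow> \<forall>i\<in>R. 0 \<le> x i \<Longrightarrow> 0 \<le> esym x R r"
  unfolding esym_def by (intro sum_nonneg prod_nonneg) auto

lemma esym_insert:
  assumes "finite R" "t \<notin> R"
  shows "esym x (insert t R) (Suc r) = esym x R (Suc r) + x t * esym x R r"
proof -
  let ?A = "{U. U \<subseteq> R \<and> card U = Suc r}"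
  let ?C = "{U. U \<subseteq> R \<and> card U = r}"
  have finA: "finite ?A" "finite ?C" using assms(1) by auto
  have eq: "{U. U \<subseteq> insert t R \<and> card U = Suc r} = ?A \<union> insert t ` ?C"
  proof (intro equalityI subsetI)
    fix U assume U: "U \<in> {U. U \<subseteq> insert t R \<and> card U = Suc r}"
    show "U \<in> ?A \<union> insert t ` ?C"
    proof (cases "t \<in> U")
      case True
      have fU: "finite U" using U assms(1) by (auto intro: finite_subset)
      have "U = insert t (U - {t})" using True by auto
      moreover have "U - {t} \<in> ?C" using U True fU by auto
      ultimately show ?thesis by blast
    next
      case False
      then show ?thesis using U by auto
    qed
  next
    fix U assume "U \<in> ?A \<union> insert t ` ?C"
    then show "U \<in> {U. U \<subseteq> insert t R \<and> card U = Suc r}"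
    proof
      assume "U \<in> ?A" then show ?thesis by auto
    next
      assume "U \<in> insert t ` ?C"
      then obtain V where V: "V \<in> ?C" "U = insert t V" by auto
      have "finite V" using V assms(1) by (auto intro: finite_subset)
      moreover have "t \<notin> V" using V assms(2) by auto
      ultimately show ?thesis using V by auto
    qed
  qed
  have disj: "?A \<inter> insert t ` ?C = {}" using assms(2) by auto
  have inj: "inj_on (insert t) ?C" using assms(2) unfolding inj_on_def by (metis (no_types, lifting) insert_ident mem_Collect_eq subset_eq)
  have "esym x (insert t R) (Suc r) = (\<Sum>U\<in>?A. \<Prod>i\<in>U. x i) + (\<Sum>U\<in>insert t ` ?C. \<Prod>i\<in>U. x i)"
    unfolding esym_def eq by (rule sum.union_disjoint) (use finA disj in auto)
  also have "(\<Sum>U\<in>insert t ` ?C. \<Prod>i\<in>U. x i) = (\<Sum>V\<in>?C. \<Prod>i\<in>insert t V. x i)"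
    by (rule sum.reindex[OF inj, unfolded o_def])
  also have "\<dots> = (\<Sum>V\<in>?C. x t * (\<Prod>i\<in>V. x i))"
  proof (rule sum.cong[OF refl])
    fix V assume "V \<in> ?C"
    then have "finite V" "t \<notin> V" using assms by (auto intro: finite_subset)
    then show "(\<Prod>i\<in>insert t V. x i) = x t * (\<Prod>i\<in>V. x i)" by simp
  qed
  finally show ?thesis by (simp add: esym_def sum_distrib_left)
qed

lemma esym_ratio:
  assumes "finite R" "\<forall>i\<in>R. 0 \<le> x i"
  shows "real (Suc r) * esym x R (Suc r) \<le> sum x R * esym x R r"
  using assms
proof (induction R arbitrary: r rule: finite_induct)
  case empty
  then show ?case by (simp add: esym_empty_Suc)
next
  case (insert t R)
  have xt: "0 \<le> x t" using insert.prems by auto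
  have xR: "\<forall>i\<in>R. 0 \<le> x i" using insert.prems by auto
  note IH = insert.IH[OF xR]
  show ?case
  proof (cases r)
    case 0
    have "real (Suc 0) * esym x R (Suc 0) \<le> sum x R * esym x R 0" by (rule IH)
    then show ?thesis using 0 insert.hyps by (simp add: esym_insert esym_0)
  next
    case (Suc q)
    have i1: "real (Suc (Suc q)) * esym x R (Suc (Suc q)) \<le> sum x R * esym x R (Suc q)" by (rule IH)
    have i2: "real (Suc q) * esym x R (Suc q) \<le> sum x R * esym x R q" by (rule IH)
    have e0: "0 \<le> esym x R q" by (rule esym_nonneg[OF insert.hyps(1) xR])
    have "real (Suc (Suc q)) * esym x (insert t R) (Suc (Suc q)) =
      real (Suc (Suc q)) * esym x R (Suc (Suc q)) + x t * (real (Suc q) * esym x R (Suc q)) + x t * esym x R (Suc q)"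
      using insert.hyps by (simp add: esym_insert algebra_simps)
    also have "\<dots> \<le> sum x R * esym x R (Suc q) + x t * (sum x R * esym x R q) + x t * esym x R (Suc q) + x t * x t * esym x R q"
      using i1 mult_left_mono[OF i2 xt] mult_nonneg_nonneg[OF mult_nonneg_nonneg[OF xt xt] e0] by linarith
    also have "\<dots> = sum x (insert t R) * esym x (insert t R) (Suc q)"
      using insert.hyps by (simp add: esym_insert algebra_simps)
    finally show ?thesis using Suc by simp
  qed
qed

lemma esym_step:
  assumes "finite R" "t \<notin> R" "\<forall>i\<in>insert t R. 0 \<le> x i \<and> x i \<le> 1"
  shows "esym x (insert t R) (Suc r) \<le> (1 + sum x R / real (Suc r)) * esym x R r"
proof -
  have xR: "\<forall>i\<in>R. 0 \<le> x i" using assms(3) by auto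
  have e0: "0 \<le> esym x R r" by (rule esym_nonneg[OF assms(1) xR])
  have r1: "real (Suc r) * esym x R (Suc r) \<le> sum x R * esym x R r" by (rule esym_ratio[OF assms(1) xR])
  then have r2: "esym x R (Suc r) \<le> sum x R / real (Suc r) * esym x R r"
    by (simp add: field_simps)
  have "x t * esym x R r \<le> esym x R r" using assms(3) e0 by (simp add: mult_left_le_one_le)
  then show ?thesis using r2 assms by (simp add: esym_insert algebra_simps)
qed

lemma esym_core:
  assumes "finite T" "finite R" "R \<inter> T = {}" "\<forall>i\<in>R \<union> T. 0 \<le> x i \<and> x i \<le> 1"
    and "sum x (R \<union> T) \<le> K" "1 + K / real (Suc q) \<le> \<rho>"
  shows "q + card T \<le> r \<Longrightarrow> esym x (R \<union> T) r \<le> \<rho> ^ card T * esym x R (r - card T)"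
  using assms(1,3,4,5)
proof (induction T arbitrary: r rule: finite_induct)
  case empty
  then show ?case by simp
next
  case (insert t T)
  have tR: "t \<notin> R \<union> T" using insert.hyps insert.prems by auto
  have bnd: "\<forall>i\<in>insert t (R \<union> T). 0 \<le> x i \<and> x i \<le> 1" using insert.prems by auto
  have finRT: "finite (R \<union> T)" using assms(2) insert.hyps by auto
  obtain r' where r': "r = Suc r'" "q + card T \<le> r'"
    using insert.prems insert.hyps by (cases r) auto
  have sRT: "sum x (R \<union> T) \<le> K"
  proof -
    have "sum x (R \<union> T) \<le> sum x (R \<union> insert t T)"
      by (rule sum_mono2) (use finRT bnd in auto)
    then show ?thesis using insert.prems by simp
  qed
  have s0: "0 \<le> sum x (R \<union> T)" using bnd by (intro sum_nonneg) auto
  have IH: "esym x (R \<union> T) r' \<le> \<rho> ^ card T * esym x R (r' - card T)"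
    using insert.IH[of r'] r' insert.prems sRT by auto
  have e0: "0 \<le> esym x (R \<union> T) r'" by (rule esym_nonneg[OF finRT]) (use bnd in auto)
  have "sum x (R \<union> T) / real (Suc r') \<le> K / real (Suc q)"
  proof -
    have "sum x (R \<union> T) / real (Suc r') \<le> sum x (R \<union> T) / real (Suc q)"
      using s0 r' by (intro divide_left_mono) auto
    also have "\<dots> \<le> K / real (Suc q)" using sRT by (intro divide_right_mono) auto
    finally show ?thesis .
  qed
  then have fac: "1 + sum x (R \<union> T) / real (Suc r') \<le> \<rho>" using assms(6) by linarith
  have "esym x (R \<union> insert t T) r = esym x (insert t (R \<union> T)) (Suc r')" using r' by simp
  also have "\<dots> \<le> (1 + sum x (R \<union> T) / real (Suc r')) * esym x (R \<union> T) r'"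
    by (rule esym_step[OF finRT tR bnd])
  also have "\<dots> \<le> \<rho> * esym x (R \<union> T) r'" by (rule mult_right_mono[OF fac e0])
  also have "\<dots> \<le> \<rho> * (\<rho> ^ card T * esym x R (r' - card T))"
    using IH fac s0 by (intro mult_left_mono) (auto intro: order_trans[rotated])
  also have "\<dots> = \<rho> ^ card (insert t T) * esym x R (r - card (insert t T))"
    using insert.hyps r' by simp
  finally show ?case .
qed

lemma wdet_expand:
  fixes a :: "nat \<Rightarrow> real ^ 'm::finite"
  assumes "finite S"
  shows "wdet y a S = (\<Sum>T\<in>msub S TYPE('m). (\<Prod>t\<in>T. y t) * wdet (\<lambda>_. 1) a T)"
  unfolding exp2[OF assms]
proof (rule sum.cong[OF refl])
  fix T assume "T \<in> msub S TYPE('m)"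
  then have "finite T" "card T = CARD('m)" using assms unfolding msub_def by (auto intro: finite_subset)
  then show "(\<Prod>t\<in>T. y t) * (\<Sum>f\<in>{f :: 'm \<Rightarrow> nat. inj f \<and> range f = T}. Gf a f) = (\<Prod>t\<in>T. y t) * wdet (\<lambda>_. 1) a T"
    by (simp add: Dsum)
qed

lemma wdet_indicator:
  fixes a :: "nat \<Rightarrow> real ^ 'm::finite"
  assumes "finite N" "S \<subseteq> N"
  shows "wdet (\<lambda>i. if i \<in> S then 1 else 0) a N = wdet (\<lambda>_. 1) a S"
proof -
  have "(\<Sum>i\<in>N. (if i \<in> S then 1 else 0) *\<^sub>R outer (a i)) = (\<Sum>i\<in>N. if i \<in> S then 1 *\<^sub>R outer (a i) else 0)"
    by (rule sum.cong) auto
  also have "\<dots> = (\<Sum>i\<in>N \<inter> S. 1 *\<^sub>R outer (a i))" by (rule sum.inter_restrict[OF assms(1), symmetric])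
  also have "N \<inter> S = S" using assms by auto
  finally show ?thesis by (simp add: wdet_def)
qed

lemma arith_key:
  fixes \<epsilon> k m :: real
  assumes "0 < \<epsilon>" "\<epsilon> < 1/2" "1 \<le> m" "m \<le> k" "(m - 1) / (2 * \<epsilon>) \<le> k"
  shows "(1/2 - \<epsilon>) * (1 + k / (k - m + 1)) \<le> 1"
proof -
  have d: "m - 1 \<le> 2 * \<epsilon> * k" using assms by (simp add: field_simps)
  have e: "\<epsilon> * (m - 1) \<le> (1/2) * (m - 1)" using assms by (intro mult_right_mono) auto
  have pos: "0 < k - m + 1" using assms by simp
  have "(1/2 - \<epsilon>) * (2 * k - m + 1) \<le> k - m + 1"
    using d e by (simp add: algebra_simps)
  moreover have "1 + k / (k - m + 1) = (2 * k - m + 1) / (k - m + 1)" using pos by (simp add: field_simps)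
  ultimately show ?thesis using pos by (simp add: field_simps)
qed

lemma key_T:
  fixes x :: "nat \<Rightarrow> real" and c :: real
  assumes "finite N" "T \<subseteq> N" "card T = m" "m \<le> k" "\<forall>i\<in>N. 0 \<le> x i \<and> x i \<le> 1"
    and "sum x N = real k" "0 \<le> c" "c * (1 + real k / real (Suc (k - m))) \<le> 1"
  shows "c ^ m * esym x N k * (\<Prod>i\<in>T. x i) \<le> (\<Sum>S\<in>{S. S \<subseteq> N \<and> card S = k}. if T \<subseteq> S then \<Prod>i\<in>S. x i else 0)"
proof -
  define R where "R = N - T"
  define \<rho> where "\<rho> = 1 + real k / real (Suc (k - m))"
  have finT: "finite T" using assms(1,2) by (auto intro: finite_subset)
  have finR: "finite R" using assms(1) unfolding R_def by auto
  have RT: "R \<union> T = N" "R \<inter> T = {}" using assms(2) unfolding R_def by auto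
  have core: "esym x (R \<union> T) k \<le> \<rho> ^ card T * esym x R (k - card T)"
    by (rule esym_core[OF finT finR RT(2), of x "real k" "k - m" \<rho>])
       (use assms RT in \<open>auto simp: \<rho>_def\<close>)
  have eR: "0 \<le> esym x R (k - m)" by (rule esym_nonneg[OF finR]) (use assms RT in auto)
  have rho0: "0 \<le> \<rho>" unfolding \<rho>_def by (simp add: add_nonneg_nonneg)
  have cr: "(c * \<rho>) ^ m \<le> 1" using assms(7,8) rho0 by (intro power_le_one) (auto simp: \<rho>_def)
  have "c ^ m * esym x N k \<le> c ^ m * (\<rho> ^ m * esym x R (k - m))"
    using core RT assms(3,7) by (intro mult_left_mono) auto
  also have "\<dots> = (c * \<rho>) ^ m * esym x R (k - m)" by (simp add: power_mult_distrib)
  also have "\<dots> \<le> esym x R (k - m)" by (rule mult_left_le_one_le[OF eR _ cr]) (use assms(7) rho0 in simp)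
  finally have E1: "c ^ m * esym x N k \<le> esym x R (k - m)" .
  have pT: "0 \<le> (\<Prod>i\<in>T. x i)" using assms(2,5) by (intro prod_nonneg) auto
  have "(\<Sum>S\<in>{S. S \<subseteq> N \<and> card S = k}. if T \<subseteq> S then \<Prod>i\<in>S. x i else 0) =
        (\<Sum>S\<in>{S \<in> {S. S \<subseteq> N \<and> card S = k}. T \<subseteq> S}. \<Prod>i\<in>S. x i)"
    by (rule sum.inter_filter[symmetric]) (use assms(1) in auto)
  also have "{S \<in> {S. S \<subseteq> N \<and> card S = k}. T \<subseteq> S} = (\<lambda>U. U \<union> T) ` {U. U \<subseteq> R \<and> card U = k - m}"
  proof (intro equalityI subsetI)
    fix S assume S: "S \<in> {S \<in> {S. S \<subseteq> N \<and> card S = k}. T \<subseteq> S}"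
    then have "S - T \<subseteq> R" "card (S - T) = k - m" "S = (S - T) \<union> T"
      using finT assms(3) by (auto simp: R_def card_Diff_subset)
    then show "S \<in> (\<lambda>U. U \<union> T) ` {U. U \<subseteq> R \<and> card U = k - m}" by blast
  next
    fix S assume "S \<in> (\<lambda>U. U \<union> T) ` {U. U \<subseteq> R \<and> card U = k - m}"
    then obtain U where U: "U \<subseteq> R" "card U = k - m" "S = U \<union> T" by auto
    have fU: "finite U" using U finR by (auto intro: finite_subset)
    have "card S = k" using U fU finT RT assms(3,4) by (subst U(3), subst card_Un_disjoint) auto
    then show "S \<in> {S \<in> {S. S \<subseteq> N \<and> card S = k}. T \<subseteq> S}" using U RT by auto
  qed
  also have "(\<Sum>S\<in>(\<lambda>U. U \<union> T) ` {U. U \<subseteq> R \<and> card U = k - m}. \<Prod>i\<in>S. x i) =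
      (\<Sum>U\<in>{U. U \<subseteq> R \<and> card U = k - m}. \<Prod>i\<in>U \<union> T. x i)"
  proof (rule sum.reindex[unfolded o_def])
    show "inj_on (\<lambda>U. U \<union> T) {U. U \<subseteq> R \<and> card U = k - m}"
      unfolding inj_on_def using RT(2) by blast
  qed
  also have "\<dots> = (\<Sum>U\<in>{U. U \<subseteq> R \<and> card U = k - m}. (\<Prod>i\<in>U. x i) * (\<Prod>i\<in>T. x i))"
  proof (rule sum.cong[OF refl])
    fix U assume "U \<in> {U. U \<subseteq> R \<and> card U = k - m}"
    then have "finite U" "U \<inter> T = {}" using finR RT(2) by (auto intro: finite_subset)
    then show "(\<Prod>i\<in>U \<union> T. x i) = (\<Prod>i\<in>U. x i) * (\<Prod>i\<in>T. x i)"
      using finT by (simp add: prod.union_disjoint)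
  qed
  also have "\<dots> = esym x R (k - m) * (\<Prod>i\<in>T. x i)" by (simp add: esym_def sum_distrib_right)
  finally show ?thesis using E1 pT by (simp add: mult_right_mono)
qed

theorem corollary1:
  fixes a :: "nat \<Rightarrow> real ^ 'm" and n k :: nat and \<epsilon> :: real
    and xh :: "nat \<Rightarrow> real" and wh :: real
  assumes "0 < \<epsilon>" "\<epsilon> < 1"
    and "CARD('m) \<le> k" "k \<le> n"
    and "real k \<ge> (real CARD('m) - 1) / (2 * \<epsilon>)"
    and "relax_optimal n k a xh wh"
  shows "(\<Sum>S\<in>ksubsets n k. sample_prob n k xh S * wdet (\<lambda>_. 1) a S) powr (1 / real CARD('m))
         \<ge> (0.5 - \<epsilon>) * Max ((\<lambda>S. wdet (\<lambda>_. 1) a S powr (1 / real CARD('m))) ` ksubsets n k)"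
proof -
  define m where "m = CARD('m)"
  define N where "N = {1..n}"
  define K where "K = ksubsets n k"
  define E where "E = esym xh N k"
  define Ds where "Ds = wdet xh a N"
  define Mx where "Mx = Max ((\<lambda>S. wdet (\<lambda>_. 1) a S powr (1 / real m)) ` K)"
  define Q where "Q = (\<Sum>S\<in>K. sample_prob n k xh S * wdet (\<lambda>_. 1) a S)"
  define c where "c = (0.5 - \<epsilon> :: real)"
  have m1: "1 \<le> m" unfolding m_def by (simp add: Suc_le_eq)
  have finN: "finite N" unfolding N_def by simp
  have KN: "K = {S. S \<subseteq> N \<and> card S = k}" unfolding K_def ksubsets_def N_def by simp
  have finK: "finite K" unfolding KN using finN by auto
  have Kne: "{1..k} \<in> K" unfolding KN N_def using assms(4) by auto
  have feas: "wh \<le> Ds powr (1 / real m)" "sum xh N = real k" "\<forall>i\<in>N. 0 \<le> xh i \<and> xh i \<le> 1"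
    using assms(6) unfolding relax_optimal_def relax_feasible_def Ds_def N_def m_def by auto
  have opt: "\<And>x' w'. relax_feasible n k a x' w' \<Longrightarrow> w' \<le> wh"
    using assms(6) unfolding relax_optimal_def by auto
  have Dexp: "Ds = (\<Sum>T\<in>msub N TYPE('m). (\<Prod>t\<in>T. xh t) * wdet (\<lambda>_. 1) a T)"
    unfolding Ds_def by (rule wdet_expand[OF finN])
  have Dpos: "\<And>T. T \<in> msub N TYPE('m) \<Longrightarrow> 0 \<le> wdet (\<lambda>_. 1) a T"
    by (rule Dnonneg) (auto simp: msub_def intro: finite_subset[OF _ finN])
  have Ds0: "0 \<le> Ds" unfolding Dexp
  proof (intro sum_nonneg mult_nonneg_nonneg prod_nonneg)
    fix T t assume "T \<in> msub N TYPE('m)" "t \<in> T"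
    then show "0 \<le> xh t" using feas(3) by (auto simp: msub_def)
  qed (rule Dpos)
  have each: "\<And>S. S \<in> K \<Longrightarrow> wdet (\<lambda>_. 1) a S powr (1 / real m) \<le> Ds powr (1 / real m)"
  proof -
    fix S assume S: "S \<in> K"
    let ?x = "\<lambda>i. if i \<in> S then 1 else (0::real)"
    have SN: "S \<subseteq> N" "card S = k" using S unfolding KN by auto
    have "relax_feasible n k a ?x (wdet (\<lambda>_. 1) a S powr (1 / real m))"
      unfolding relax_feasible_def
    proof (intro conjI)
      show "wdet (\<lambda>_. 1) a S powr (1 / real m) \<le> wdet ?x a {1..n} powr (1 / real CARD('m))"
        using wdet_indicator[OF finN SN(1), of a] unfolding N_def m_def by simp
      have "(\<Sum>i\<in>{1..n}. ?x i) = (\<Sum>i\<in>N \<inter> S. 1)"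
        unfolding N_def by (rule sum.inter_restrict[OF finN[unfolded N_def], symmetric])
      also have "N \<inter> S = S" using SN by auto
      finally show "(\<Sum>i\<in>{1..n}. ?x i) = real k" using SN by simp
    qed auto
    then have "wdet (\<lambda>_. 1) a S powr (1 / real m) \<le> wh" by (rule opt)
    then show "wdet (\<lambda>_. 1) a S powr (1 / real m) \<le> Ds powr (1 / real m)" using feas(1) by linarith
  qed
  have Mx_le: "Mx \<le> Ds powr (1 / real m)"
    unfolding Mx_def using finK Kne each by (subst Max_le_iff) auto
  have Mx0: "0 \<le> Mx"
  proof -
    have "wdet (\<lambda>_. 1) a {1..k} powr (1 / real m) \<le> Mx"
      unfolding Mx_def using finK Kne by (intro Max_ge) auto
    then show ?thesis by (meson order_trans powr_ge_zero)
  qed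
  have goal: "c * Mx \<le> Q powr (1 / real m)"
  proof (cases "c \<le> 0")
    case True
    then have "c * Mx \<le> 0" using Mx0 by (simp add: mult_nonpos_nonneg)
    then show ?thesis by (meson order_trans powr_ge_zero)
  next
    case False
    then have c0: "0 < c" by simp
    have eps: "\<epsilon> < 1/2" using c0 unfolding c_def by simp
    have ck: "c * (1 + real k / real (Suc (k - m))) \<le> 1"
    proof -
      have "real (Suc (k - m)) = real k - real m + 1" using assms(3) unfolding m_def by auto
      then show ?thesis
        using arith_key[OF assms(1) eps, of "real m" "real k"] assms(3,5) m1 unfolding c_def m_def
        by (simp add: add.commute)
    qed
    have E0: "0 < E"
    proof -
      define P where "P = {i\<in>N. 0 < xh i}"
      have finP: "finite P" unfolding P_def using finN by auto
      have "real k = sum xh N" using feas(2) by simp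
      also have "\<dots> = sum xh P"
        unfolding P_def by (rule sum.mono_neutral_right[OF finN]) (use feas(3) in force)+
      also have "\<dots> \<le> sum (\<lambda>_. 1) P" by (rule sum_mono) (use feas(3) in \<open>auto simp: P_def\<close>)
      finally have "k \<le> card P" by simp
      then obtain U where U: "U \<subseteq> P" "card U = k" "finite U" by (rule obtain_subset_with_card_n)
      have UK: "U \<in> {U. U \<subseteq> N \<and> card U = k}" using U unfolding P_def by auto
      have pU: "0 < (\<Prod>i\<in>U. xh i)" using U unfolding P_def by (intro prod_pos) auto
      have "(\<Prod>i\<in>U. xh i) \<le> E"
        unfolding E_def esym_def
        by (rule member_le_sum[OF UK]) (use feas(3) finN in \<open>auto intro!: prod_nonneg\<close>)
      then show ?thesis using pU by linarith
    qed
    have EK: "E = (\<Sum>S\<in>K. \<Prod>i\<in>S. xh i)" unfolding E_def esym_def KN ..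
    have inner: "\<And>S. S \<in> K \<Longrightarrow> wdet (\<lambda>_. 1) a S =
        (\<Sum>T\<in>msub N TYPE('m). if T \<subseteq> S then wdet (\<lambda>_. 1) a T else 0)"
    proof -
      fix S assume "S \<in> K"
      then have SN: "S \<subseteq> N" "finite S" unfolding KN using finN by (auto intro: finite_subset)
      have "wdet (\<lambda>_. 1) a S = (\<Sum>T\<in>msub S TYPE('m). wdet (\<lambda>_. 1) a T)"
        using wdet_expand[OF SN(2), of "\<lambda>_. 1" a] by simp
      also have "msub S TYPE('m) = {T \<in> msub N TYPE('m). T \<subseteq> S}" using SN unfolding msub_def by auto
      also have "(\<Sum>T\<in>{T \<in> msub N TYPE('m). T \<subseteq> S}. wdet (\<lambda>_. 1) a T) =
          (\<Sum>T\<in>msub N TYPE('m). if T \<subseteq> S then wdet (\<lambda>_. 1) a T else 0)"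
        by (rule sum.inter_filter) (use finN in \<open>auto simp: msub_def\<close>)
      finally show "wdet (\<lambda>_. 1) a S = (\<Sum>T\<in>msub N TYPE('m). if T \<subseteq> S then wdet (\<lambda>_. 1) a T else 0)" .
    qed
    have "(\<Sum>S\<in>K. (\<Prod>i\<in>S. xh i) * wdet (\<lambda>_. 1) a S) =
        (\<Sum>S\<in>K. \<Sum>T\<in>msub N TYPE('m). (if T \<subseteq> S then \<Prod>i\<in>S. xh i else 0) * wdet (\<lambda>_. 1) a T)"
      by (rule sum.cong[OF refl]) (simp add: inner sum_distrib_left, rule sum.cong, auto)
    also have "\<dots> = (\<Sum>T\<in>msub N TYPE('m). \<Sum>S\<in>K. (if T \<subseteq> S then \<Prod>i\<in>S. xh i else 0) * wdet (\<lambda>_. 1) a T)"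
      by (rule sum.swap)
    also have "\<dots> = (\<Sum>T\<in>msub N TYPE('m). (\<Sum>S\<in>K. if T \<subseteq> S then \<Prod>i\<in>S. xh i else 0) * wdet (\<lambda>_. 1) a T)"
      by (simp add: sum_distrib_right)
    also have "\<dots> \<ge> (\<Sum>T\<in>msub N TYPE('m). (c ^ m * E * (\<Prod>i\<in>T. xh i)) * wdet (\<lambda>_. 1) a T)"
    proof (rule sum_mono)
      fix T assume T: "T \<in> msub N TYPE('m)"
      have "c ^ m * E * (\<Prod>i\<in>T. xh i) \<le> (\<Sum>S\<in>K. if T \<subseteq> S then \<Prod>i\<in>S. xh i else 0)"
        unfolding E_def KN
        by (rule key_T[OF finN _ _ _ feas(3) feas(2)]) (use T assms(3) c0 ck in \<open>auto simp: msub_def m_def\<close>)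
      then show "(c ^ m * E * (\<Prod>i\<in>T. xh i)) * wdet (\<lambda>_. 1) a T \<le>
          (\<Sum>S\<in>K. if T \<subseteq> S then \<Prod>i\<in>S. xh i else 0) * wdet (\<lambda>_. 1) a T"
        using Dpos[OF T] by (rule mult_right_mono)
    qed
    also have "(\<Sum>T\<in>msub N TYPE('m). (c ^ m * E * (\<Prod>i\<in>T. xh i)) * wdet (\<lambda>_. 1) a T) = c ^ m * E * Ds"
      unfolding Dexp by (simp add: sum_distrib_left mult.assoc)
    finally have main: "c ^ m * E * Ds \<le> (\<Sum>S\<in>K. (\<Prod>i\<in>S. xh i) * wdet (\<lambda>_. 1) a S)" .
    have "Q = (\<Sum>S\<in>K. (\<Prod>i\<in>S. xh i) * wdet (\<lambda>_. 1) a S) / E"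
      unfolding Q_def sample_prob_def K_def[symmetric] EK[symmetric]
      by (simp add: sum_divide_distrib)
    moreover have "c ^ m * Ds \<le> (\<Sum>S\<in>K. (\<Prod>i\<in>S. xh i) * wdet (\<lambda>_. 1) a S) / E"
      using main E0 by (subst pos_le_divide_eq) (auto simp: algebra_simps)
    ultimately have Qge: "c ^ m * Ds \<le> Q" by simp
    have cm0: "0 \<le> c ^ m" using c0 by simp
    have m0: "0 < real m" using m1 by simp
    have cpow: "(c ^ m) powr (1 / real m) = c"
      using c0 m0 by (simp add: powr_realpow[symmetric] powr_powr)
    have "c * Mx \<le> c * Ds powr (1 / real m)" using Mx_le c0 by simp
    also have "\<dots> = (c ^ m) powr (1 / real m) * Ds powr (1 / real m)" by (simp add: cpow)
    also have "(c ^ m) powr (1 / real m) * Ds powr (1 / real m) = (c ^ m * Ds) powr (1 / real m)"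
      using cm0 Ds0 by (simp add: powr_mult)
    also have "\<dots> \<le> Q powr (1 / real m)"
      using Qge cm0 Ds0 by (intro powr_mono2) auto
    finally show ?thesis .
  qed
  then show ?thesis unfolding c_def Mx_def Q_def K_def m_def by simp
qed

end
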